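(* Let $\lambda\in(1/2,1)$ be the reciprocal of a Garsia number. Let $X=[0,1]^2$, let $S_0,S_1:X\to X$ be given by $S_0(x)=\lambda x$ and $S_1(x)=\lambda x+(1-\lambda,0)$, let $C=\{0\}\times[0,1]$, and let $F_C^\lambda$ be the unique non-empty compact set satisfying $F_C^\lambda=S_0(F_C^\lambda)\cup S_1(F_C^\lambda)\cup C$. Then the box dimension of $F_C^\lambda$ exists and \[ \dim_{\mathrm B} F_C^\lambda=\frac{\log(4\lambda)}{\log 2}>1. \]
   Context: A Garsia number is a positive real algebraic integer with norm $\pm2$ all of whose Galois conjugates have modulus strictly greater than $1$. For bounded $E\subseteq\mathbb{R}^n$ and $\delta>0$, $N_\delta(E)$ is the number of half-open cubes (products of half-open intervals $[a,b)$) of the $\delta$-mesh aligned with the coordinate axes that intersect $E$; the upper and lower box dimensions are $\limsup_{\delta\to0}$ and $\liminf_{\delta\to0}$ of $\log N_\delta(E)/(-\log\delta)$, and the box dimension $\dim_{\mathrm B}E$ is their common value when they agree. *)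

theory Defs
  imports "HOL-Analysis.Analysis" "HOL-Computational_Algebra.Polynomial"
    "HOL-Library.Extended_Real"
begin

definition garsia_number :: "real \<Rightarrow> bool" where
  "garsia_number x \<longleftrightarrow> x > 0 \<and>
     (\<exists>p :: int poly. lead_coeff p = 1 \<and> irreducible p \<and>
        poly (map_poly of_int p) x = 0 \<and>
        \<bar>coeff p 0\<bar> = 2 \<and>
        (\<forall>z :: complex. poly (map_poly of_int p) z = 0 \<longrightarrow> cmod z > 1))"

text \<open>Number of half-open cubes \<open>[k\<delta>,(k+1)\<delta>) \<times> [l\<delta>,(l+1)\<delta>)\<close> of the
  \<open>\<delta>\<close>-mesh meeting \<open>E \<subseteq> \<real>\<^sup>2\<close>.\<close>
definition mesh_count :: "real \<Rightarrow> (real \<times> real) set \<Rightarrow> nat" where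
  "mesh_count \<delta> E = card ((\<lambda>p. (\<lfloor>fst p / \<delta>\<rfloor>, \<lfloor>snd p / \<delta>\<rfloor>)) ` E)"

definition upper_box_dim :: "(real \<times> real) set \<Rightarrow> ereal" where
  "upper_box_dim E = Limsup (at_right 0)
     (\<lambda>\<delta>. ereal (ln (real (mesh_count \<delta> E)) / (- ln \<delta>)))"

definition lower_box_dim :: "(real \<times> real) set \<Rightarrow> ereal" where
  "lower_box_dim E = Liminf (at_right 0)
     (\<lambda>\<delta>. ereal (ln (real (mesh_count \<delta> E)) / (- ln \<delta>)))"

end

theory Submission
  imports Defs "HOL-Real_Asymp.Real_Asymp" "Subresultants.Subresultant_Gcd" "Berlekamp_Zassenhaus.Mahler_Measure"
begin


abbreviation rts :: "complex poly \<Rightarrow> complex list" where "rts \<equiv> complex_roots_complex"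

lemma prod_list_const_mult: "(\<Prod>x\<leftarrow>xs. c * f x) = c ^ length xs * (\<Prod>x\<leftarrow>xs. f x)"
  for c :: "'a::comm_monoid_mult"
  by (induct xs) (auto simp: ac_simps)

lemma prod_list_mult_distrib: "(\<Prod>x\<leftarrow>xs. f x * g x) = (\<Prod>x\<leftarrow>xs. f x) * (\<Prod>x\<leftarrow>xs. g x)"
  for f g :: "_ \<Rightarrow> 'a::comm_monoid_mult"
  by (induct xs) (auto simp: ac_simps)

lemma prod_list_swap: "(\<Prod>x\<leftarrow>xs. \<Prod>y\<leftarrow>ys. f x y) = (\<Prod>y\<leftarrow>ys. \<Prod>x\<leftarrow>xs. f x y)"
  for f :: "_ \<Rightarrow> _ \<Rightarrow> 'a::comm_monoid_mult"
proof (induct xs)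
  case Nil then show ?case by (induct ys) auto
next
  case (Cons a xs) then show ?case by (simp add: prod_list_mult_distrib)
qed

lemma prod_list_const: "(\<Prod>x\<leftarrow>xs. c) = c ^ length xs" for c :: "'a::comm_monoid_mult"
  by (induct xs) auto

lemma norm_prod_list: "cmod (\<Prod>x\<leftarrow>xs. f x) = (\<Prod>x\<leftarrow>xs. cmod (f x))"
  by (induct xs) (auto simp: norm_mult)

lemma poly_via_roots: "poly G x = lead_coeff G * (\<Prod>b\<leftarrow>rts G. x - b)"
proof -
  have "poly G x = poly (Polynomial.smult (lead_coeff G) (\<Prod>a\<leftarrow>rts G. [:- a, 1:])) x"
    by (simp only: complex_roots(1))
  also have "\<dots> = lead_coeff G * (\<Prod>b\<leftarrow>rts G. x - b)"
    by (simp add: poly_prod_list o_def)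
  finally show ?thesis .
qed

definition RR :: "complex poly \<Rightarrow> complex poly \<Rightarrow> real" where
  "RR G F = cmod (lead_coeff G) ^ degree F * (\<Prod>b\<leftarrow>rts G. cmod (poly F b))"

lemma RR_expand: "RR G F = cmod (lead_coeff G) ^ degree F * cmod (lead_coeff F) ^ degree G *
   (\<Prod>b\<leftarrow>rts G. \<Prod>a\<leftarrow>rts F. cmod (b - a))"
proof -
  have "RR G F = cmod (lead_coeff G) ^ degree F * (\<Prod>b\<leftarrow>rts G. cmod (lead_coeff F) * (\<Prod>a\<leftarrow>rts F. cmod (b - a)))"
    unfolding RR_def by (simp add: poly_via_roots[of F] norm_mult norm_prod_list)
  also have "\<dots> = cmod (lead_coeff G) ^ degree F * cmod (lead_coeff F) ^ degree G *
   (\<Prod>b\<leftarrow>rts G. \<Prod>a\<leftarrow>rts F. cmod (b - a))"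
    by (simp only: prod_list_const_mult complex_roots(2) mult.assoc)
  finally show ?thesis .
qed

lemma RR_sym: "RR G F = RR F G"
proof -
  have "(\<Prod>b\<leftarrow>rts G. \<Prod>a\<leftarrow>rts F. cmod (b - a)) = (\<Prod>a\<leftarrow>rts F. \<Prod>b\<leftarrow>rts G. cmod (a - b))"
    by (subst prod_list_swap) (simp add: norm_minus_commute)
  then show ?thesis unfolding RR_expand[of G F] RR_expand[of F G] by (simp add: ac_simps)
qed

lemma root_in_rts: "b \<in> set (rts G) \<Longrightarrow> poly G b = 0"
  by (simp add: poly_via_roots prod_list_zero_iff)

lemma res_step:
  fixes F G :: "complex poly"
  assumes IH: "\<And>F' G'. F' \<noteq> 0 \<Longrightarrow> G' \<noteq> 0 \<Longrightarrow> degree F' + degree G' < degree F + degree G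
      \<Longrightarrow> cmod (resultant F' G') = RR G' F'"
    and F0: "F \<noteq> 0" and G0: "G \<noteq> 0" and dfg: "degree G \<le> degree F"
  shows "cmod (resultant F G) = RR G F"
proof (cases "degree G = 0")
  case True
  then obtain g where g: "G = [:g:]" by (auto elim: degree_eq_zeroE)
  show ?thesis by (simp add: g RR_def norm_power)
next
  case False
  define H where "H = F mod G"
  define B where "B = F div G"
  have eq: "F + (-B) * G = H" unfolding H_def B_def
    by (metis add_diff_cancel_left' diff_conv_add_uminus div_mult_mod_eq minus_mult_left)
  have dH: "degree H < degree G"
  proof (cases "H = 0")
    case True then show ?thesis using False by simp
  next
    case False then show ?thesis unfolding H_def using G0 by (simp add: degree_mod_less')
  qed
  have ch: "degree H < degree G \<or> H = 0 \<and> F \<noteq> 0 \<and> G \<noteq> 0" using dH by simp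
  have polyFH: "poly F b = poly H b" if "b \<in> set (rts G)" for b
  proof -
    have "poly F b = poly B b * poly G b + poly H b"
      using eq by (metis add_diff_cancel_left' diff_conv_add_uminus mult_minus_left poly_add poly_mult poly_minus add.commute)
    with root_in_rts[OF that] show ?thesis by simp
  qed
  have prodFH: "(\<Prod>b\<leftarrow>rts G. cmod (poly F b)) = (\<Prod>b\<leftarrow>rts G. cmod (poly H b))"
    by (rule arg_cong[where f=prod_list], rule map_cong, auto simp: polyFH)
  have resdef: "resultant F G = Polynomial.coeff (subresultant 0 F G) 0"
    by (simp add: coeff_subresultant_0_0_resultant)
  show ?thesis
  proof (cases "degree H = 0")
    case dH0: True
    have sub: "subresultant 0 F G = Polynomial.smult
      ((- 1) ^ ((degree F - 0) * (degree G - 0)) * lead_coeff G ^ (degree F - 0) *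
       lead_coeff H ^ (degree G - 0 - 1)) H"
      using BT_lemma_1_13[OF eq dfg ch] dH dH0 by simp
    show ?thesis
    proof (cases "H = 0")
      case True
      have "rts G \<noteq> []" using False complex_roots(2)[of G] by (metis list.size(3))
      then obtain b bs where "rts G = b # bs" by (cases "rts G") auto
      then have "RR G F = 0" unfolding RR_def using polyFH[of b] True by simp
      moreover have "resultant F G = 0" unfolding resdef sub True by simp
      ultimately show ?thesis by simp
    next
      case Hn0: False
      then obtain h where h: "H = [:h:]" using dH0 by (auto elim: degree_eq_zeroE)
      have "cmod (resultant F G) = cmod (lead_coeff G) ^ degree F * cmod h ^ (degree G - 1) * cmod h"
        unfolding resdef sub by (simp add: h norm_mult norm_power)
      also have "\<dots> = cmod (lead_coeff G) ^ degree F * cmod h ^ degree G"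
        using False by (cases "degree G") auto
      also have "\<dots> = RR G F" unfolding RR_def prodFH by (simp add: h prod_list_const)
      finally show ?thesis .
    qed
  next
    case dHp: False
    have sub: "subresultant 0 F G = Polynomial.smult
      ((- 1) ^ ((degree F - 0) * (degree G - 0)) * lead_coeff G ^ (degree F - degree H))
      (subresultant 0 G H)"
      using BT_lemma_1_12[OF eq dfg ch, of 0] dHp by simp
    have Hn0: "H \<noteq> 0" using dHp by auto
    have "cmod (resultant G H) = RR H G"
      using IH[OF G0 Hn0] dH dfg by simp
    also have "\<dots> = RR G H" by (rule RR_sym)
    finally have rGH: "cmod (resultant G H) = cmod (lead_coeff G) ^ degree H * (\<Prod>b\<leftarrow>rts G. cmod (poly H b))"
      unfolding RR_def .
    have "cmod (resultant F G) = cmod (lead_coeff G) ^ (degree F - degree H) * cmod (resultant G H)"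
      unfolding resdef sub by (simp add: norm_mult norm_power coeff_subresultant_0_0_resultant)
    also have "\<dots> = cmod (lead_coeff G) ^ (degree F - degree H + degree H) * (\<Prod>b\<leftarrow>rts G. cmod (poly H b))"
      unfolding rGH by (simp add: power_add)
    also have "degree F - degree H + degree H = degree F" using dH dfg by simp
    finally show ?thesis unfolding RR_def prodFH .
  qed
qed

lemma res_RR:
  fixes F G :: "complex poly"
  shows "F \<noteq> 0 \<Longrightarrow> G \<noteq> 0 \<Longrightarrow> cmod (resultant F G) = RR G F"
proof (induction "degree F + degree G" arbitrary: F G rule: less_induct)
  case less
  show ?case
  proof (cases "degree G \<le> degree F")
    case True
    show ?thesis by (rule res_step[OF less.hyps less.prems True]) auto
  next
    case False
    have "cmod (resultant F G) = cmod (resultant G F)"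
      by (subst resultant_swap) (simp add: norm_mult norm_power)
    also have "\<dots> = RR F G"
      by (rule res_step[OF _ less.prems(2,1)]) (use False less.hyps in auto)
    also have "\<dots> = RR G F" by (rule RR_sym)
    finally show ?thesis .
  qed
qed



lemma poly_of_int_of_real: "poly (map_poly of_int p) (complex_of_real x) = complex_of_real (poly (map_poly of_int p) x)"
  by (induct p) (simp_all add: map_poly_pCons)

lemma not_dvd_small:
  fixes p R :: "int poly"
  assumes p0: "\<bar>Polynomial.coeff p 0\<bar> = 2" and R0: "R \<noteq> 0"
    and Rc: "\<And>i. \<bar>Polynomial.coeff R i\<bar> \<le> 1"
  shows "\<not> p dvd R"
proof
  assume "p dvd R"
  then obtain q where q: "R = p * q" by (auto elim: dvdE)
  with R0 have "q \<noteq> 0" by auto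
  then obtain i where qi: "Polynomial.coeff q i \<noteq> 0" by (metis leading_coeff_0_iff)
  define k where "k = (LEAST i. Polynomial.coeff q i \<noteq> 0)"
  have qk: "Polynomial.coeff q k \<noteq> 0" unfolding k_def by (rule LeastI[of _ i], rule qi)
  have qlt: "Polynomial.coeff q j = 0" if "j < k" for j
    using not_less_Least[of j "\<lambda>i. Polynomial.coeff q i \<noteq> 0"] that unfolding k_def by auto
  have "Polynomial.coeff R k = (\<Sum>j\<le>k. Polynomial.coeff p j * Polynomial.coeff q (k - j))"
    unfolding q by (rule coeff_mult)
  also have "\<dots> = (\<Sum>j\<in>{0}. Polynomial.coeff p j * Polynomial.coeff q (k - j))"
    by (rule sum.mono_neutral_right) (auto simp: qlt)
  finally have "Polynomial.coeff R k = Polynomial.coeff p 0 * Polynomial.coeff q k" by simp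
  then have "\<bar>Polynomial.coeff R k\<bar> = 2 * \<bar>Polynomial.coeff q k\<bar>" by (simp add: abs_mult p0)
  with qk have "\<bar>Polynomial.coeff R k\<bar> \<ge> 2" by linarith
  with Rc[of k] show False by simp
qed

lemma resultant_nonzero:
  fixes p R :: "int poly"
  assumes irr: "irreducible p" and p0: "\<bar>Polynomial.coeff p 0\<bar> = 2" and R0: "R \<noteq> 0"
    and Rc: "\<And>i. \<bar>Polynomial.coeff R i\<bar> \<le> 1"
  shows "resultant p R \<noteq> 0"
proof
  assume "resultant p R = 0"
  then have dg: "degree (gcd p R) \<noteq> 0" by (simp add: resultant_0_gcd)
  define g where "g = gcd p R"
  have "g dvd p" unfolding g_def by simp
  then obtain r where pr: "p = g * r" by (auto elim: dvdE)
  from irreducibleD[OF irr pr] have "is_unit g \<or> is_unit r" .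
  moreover have "\<not> is_unit g" using dg unfolding g_def
    by (metis deg_not_zero_imp_not_unit not_gr_zero)
  ultimately have "is_unit r" by simp
  then obtain r' where "1 = r * r'" by (auto elim: dvdE)
  then have "g = p * r'" using pr by (metis mult.assoc mult.right_neutral)
  then have "p dvd g" by simp
  also have "g dvd R" unfolding g_def by simp
  finally show False using not_dvd_small[OF p0 R0 Rc] by simp
qed

lemma prod_list_nonneg: "(\<And>x. x \<in> set xs \<Longrightarrow> 0 \<le> f x) \<Longrightarrow> 0 \<le> (\<Prod>x\<leftarrow>xs. f x :: real)"
  by (induct xs) auto

lemma prod_list_mono_nonneg:
  fixes f g :: "_ \<Rightarrow> real"
  assumes "\<And>x. x \<in> set xs \<Longrightarrow> 0 \<le> f x \<and> f x \<le> g x"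
  shows "(\<Prod>x\<leftarrow>xs. f x) \<le> (\<Prod>x\<leftarrow>xs. g x)"
  using assms
proof (induct xs)
  case (Cons a xs)
  have "0 \<le> (\<Prod>x\<leftarrow>xs. f x)" using Cons.prems by (intro prod_list_nonneg) auto
  moreover have "0 \<le> f a" "f a \<le> g a" using Cons.prems by auto
  moreover have "(\<Prod>x\<leftarrow>xs. f x) \<le> (\<Prod>x\<leftarrow>xs. g x)" using Cons by auto
  ultimately show ?case by (auto intro!: mult_mono)
qed simp

lemma prod_list_power: "(\<Prod>x\<leftarrow>xs. f x ^ m) = (\<Prod>x\<leftarrow>xs. f x) ^ m" for f :: "_ \<Rightarrow> 'a::comm_monoid_mult"
  by (induct xs) (auto simp: power_mult_distrib)

lemma poly_bound:
  fixes R :: "int poly" and z :: complex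
  assumes Rc: "\<And>i. \<bar>Polynomial.coeff R i\<bar> \<le> 1" and dR: "degree R \<le> m" and z1: "cmod z > 1"
  shows "cmod (poly (map_poly of_int R) z) \<le> cmod z / (cmod z - 1) * cmod z ^ m"
proof -
  let ?t = "cmod z"
  have "cmod (poly (map_poly of_int R) z) = cmod (\<Sum>i\<le>degree R. of_int (Polynomial.coeff R i) * z ^ i)"
    by (simp add: poly_altdef[of "map_poly of_int R"] degree_map_poly coeff_map_poly)
  also have "\<dots> \<le> (\<Sum>i\<le>degree R. cmod (of_int (Polynomial.coeff R i) * z ^ i))"
    by (rule norm_sum)
  also have "\<dots> \<le> (\<Sum>i\<le>degree R. ?t ^ i)"
  proof (rule sum_mono)
    fix i
    have "cmod (of_int (Polynomial.coeff R i) * z ^ i) = \<bar>real_of_int (Polynomial.coeff R i)\<bar> * ?t ^ i"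
      by (simp add: norm_mult norm_power)
    also have "\<dots> \<le> 1 * ?t ^ i" using Rc[of i]
      by (intro mult_right_mono) auto
    finally show "cmod (of_int (Polynomial.coeff R i) * z ^ i) \<le> ?t ^ i" by simp
  qed
  also have "\<dots> \<le> (\<Sum>i\<le>m. ?t ^ i)"
    by (rule sum_mono2) (use dR in auto)
  also have "\<dots> = (\<Sum>i<Suc m. ?t ^ i)" by (simp add: lessThan_Suc_atMost)
  also have "\<dots> = (?t ^ Suc m - 1) / (?t - 1)" using z1 by (intro geometric_sum) simp
  also have "\<dots> \<le> ?t ^ Suc m / (?t - 1)" using z1 by (intro divide_right_mono) auto
  also have "\<dots> = ?t / (?t - 1) * ?t ^ m" by simp
  finally show ?thesis .
qed

lemma garsia_sep:
  fixes p :: "int poly" and \<beta> :: real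
  assumes lc: "lead_coeff p = 1" and irr: "irreducible p"
    and root: "poly (map_poly of_int p) \<beta> = 0" and p0: "\<bar>Polynomial.coeff p 0\<bar> = 2"
    and conj: "\<And>z::complex. poly (map_poly of_int p) z = 0 \<Longrightarrow> cmod z > 1"
    and bpos: "\<beta> > 0"
  shows "\<exists>c>0. \<forall>R m. R \<noteq> 0 \<longrightarrow> (\<forall>i. \<bar>Polynomial.coeff R i\<bar> \<le> 1) \<longrightarrow> degree R \<le> m \<longrightarrow>
     \<bar>poly (map_poly of_int R) \<beta>\<bar> \<ge> c * (\<beta> / 2) ^ m"
proof -
  define pC :: "complex poly" where "pC = map_poly of_int p"
  define B where "B = complex_of_real \<beta>"
  have pCB: "poly pC B = 0" unfolding pC_def B_def poly_of_int_of_real root by simp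
  have lcC: "lead_coeff pC = 1" unfolding pC_def by (simp add: lc)
  have pC0: "pC \<noteq> 0" using lcC by auto
  have Bin: "B \<in> set (rts pC)"
    using pCB unfolding poly_via_roots[of pC] by (force simp add: lcC prod_list_zero_iff)
  define rest where "rest = remove1 B (rts pC)"
  have restsub: "set rest \<subseteq> set (rts pC)" unfolding rest_def by (rule set_remove1_subset)
  have big: "cmod b > 1" if "b \<in> set rest" for b
    using conj root_in_rts restsub that unfolding pC_def by blast
  have normB: "cmod B = \<beta>" unfolding B_def using bpos by simp
  have e: "((-) 0) = (uminus :: complex \<Rightarrow> complex)" by (rule ext) simp
  have eq1: "poly pC 0 = (\<Prod>b\<leftarrow>rts pC. - b)" unfolding poly_via_roots[of pC] using e by (simp add: lcC)
  have eq2: "poly pC 0 = of_int (Polynomial.coeff p 0)" unfolding pC_def by (simp add: poly_0_coeff_0 coeff_map_poly)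
  have "(\<Prod>b\<leftarrow>rts pC. cmod b) = cmod (\<Prod>b\<leftarrow>rts pC. - b)" by (simp add: norm_prod_list)
  also have "\<dots> = cmod (poly pC 0)" by (simp only: eq1)
  also have "\<dots> = \<bar>real_of_int (Polynomial.coeff p 0)\<bar>" by (simp only: eq2 norm_of_int)
  also have "\<dots> = 2" using p0 by simp
  finally have "(\<Prod>b\<leftarrow>rts pC. cmod b) = 2" .
  then have "cmod B * (\<Prod>b\<leftarrow>rest. cmod b) = 2"
    unfolding rest_def using prod_list_map_remove1[OF Bin, of cmod] by simp
  then have prodrest: "(\<Prod>b\<leftarrow>rest. cmod b) = 2 / \<beta>" using normB bpos by (simp add: field_simps)
  define K where "K = (\<Prod>b\<leftarrow>rest. cmod b / (cmod b - 1))"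
  have Kpos: "K > 0" unfolding K_def using big
  proof (induct rest)
    case (Cons a xs)
    then have a1: "1 < cmod a" by auto
    then have "cmod a / (cmod a - 1) > 0" by (intro divide_pos_pos) auto
    moreover have "(\<Prod>b\<leftarrow>xs. cmod b / (cmod b - 1)) > 0" using Cons by auto
    ultimately show ?case by (simp only: list.map prod_list.Cons mult_pos_pos)
  qed simp
  show ?thesis
  proof (intro exI[of _ "1 / K"] conjI allI impI)
    show "0 < 1 / K" using Kpos by simp
    fix R :: "int poly" and m
    assume R0: "R \<noteq> 0" and Rc: "\<forall>i. \<bar>Polynomial.coeff R i\<bar> \<le> 1" and dR: "degree R \<le> m"
    define RC :: "complex poly" where "RC = map_poly of_int R"
    have RC0: "RC \<noteq> 0" unfolding RC_def using R0 by simp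
    have res0: "resultant p R \<noteq> 0" using resultant_nonzero[OF irr p0 R0] Rc by auto
    have "1 \<le> \<bar>real_of_int (resultant p R)\<bar>" using res0 by linarith
    also have "\<dots> = cmod (resultant pC RC)"
      unfolding pC_def RC_def of_int_hom.resultant_hom by simp
    also have "\<dots> = RR RC pC" by (rule res_RR[OF pC0 RC0])
    also have "\<dots> = RR pC RC" by (rule RR_sym)
    also have "\<dots> = (\<Prod>b\<leftarrow>rts pC. cmod (poly RC b))" unfolding RR_def by (simp add: lcC)
    also have "\<dots> = cmod (poly RC B) * (\<Prod>b\<leftarrow>rest. cmod (poly RC b))"
      unfolding rest_def by (rule prod_list_map_remove1[OF Bin])
    also have "\<dots> \<le> cmod (poly RC B) * (\<Prod>b\<leftarrow>rest. cmod b / (cmod b - 1) * cmod b ^ m)"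
    proof (rule mult_left_mono[OF prod_list_mono_nonneg norm_ge_zero])
      fix b assume b: "b \<in> set rest"
      have "cmod (poly RC b) \<le> cmod b / (cmod b - 1) * cmod b ^ m"
        unfolding RC_def by (rule poly_bound[OF _ dR big[OF b]]) (use Rc in blast)
      then show "0 \<le> cmod (poly RC b) \<and> cmod (poly RC b) \<le> cmod b / (cmod b - 1) * cmod b ^ m" by simp
    qed
    also have "\<dots> = cmod (poly RC B) * (K * (2 / \<beta>) ^ m)"
      unfolding K_def prod_list_mult_distrib prod_list_power prodrest ..
    finally have ineq: "1 \<le> cmod (poly RC B) * (K * (2 / \<beta>) ^ m)" .
    have "cmod (poly RC B) = \<bar>poly (map_poly of_int R) \<beta>\<bar>"
      unfolding RC_def B_def poly_of_int_of_real by simp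
    with ineq have ineq2: "1 \<le> \<bar>poly (map_poly of_int R) \<beta>\<bar> * K * (2 / \<beta>) ^ m" by (simp add: mult.assoc)
    have pos: "(2 / \<beta>) ^ m > 0" using bpos by simp
    have "1 / K * (\<beta> / 2) ^ m = 1 / (K * (2 / \<beta>) ^ m)" using bpos by (simp add: power_divide field_simps)
    also have "\<dots> \<le> \<bar>poly (map_poly of_int R) \<beta>\<bar>"
      using ineq2 Kpos pos by (simp add: divide_le_eq mult.assoc mult.commute mult.left_commute)
    finally show "1 / K * (\<beta> / 2) ^ m \<le> \<bar>poly (map_poly of_int R) \<beta>\<bar>" .
  qed
qed



fun posw :: "real \<Rightarrow> bool list \<Rightarrow> real" where
  "posw l [] = 0"
| "posw l (b # bs) = l * posw l bs + (if b then 1 - l else 0)"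

fun Rp :: "bool list \<Rightarrow> bool list \<Rightarrow> int poly" where
  "Rp (b # bs) (c # cs) = Polynomial.monom (of_bool b - of_bool c) (Suc (length bs)) + Rp bs cs"
| "Rp _ _ = 0"

lemma Rp_deg: "length bs = length cs \<Longrightarrow> degree (Rp bs cs) \<le> length bs"
proof (induct bs cs rule: list_induct2)
  case (Cons x xs y ys)
  have "degree (Rp (x # xs) (y # ys)) \<le> max (degree (Polynomial.monom (of_bool x - of_bool y :: int) (Suc (length xs)))) (degree (Rp xs ys))"
    by (simp add: degree_add_le_max)
  also have "\<dots> \<le> Suc (length xs)" using Cons by (auto simp: degree_monom_le intro: le_trans[OF degree_monom_le])
  finally show ?case by simp
qed simp

lemma Rp_coeff: "length bs = length cs \<Longrightarrow> \<bar>Polynomial.coeff (Rp bs cs) i\<bar> \<le> 1"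
proof (induct bs cs arbitrary: i rule: list_induct2)
  case (Cons x xs y ys)
  show ?case
  proof (cases "i = Suc (length xs)")
    case True
    have "Polynomial.coeff (Rp xs ys) i = 0" using Rp_deg[OF Cons(1)] True by (simp add: coeff_eq_0)
    then show ?thesis using True by (simp add: coeff_monom)
  next
    case False
    then show ?thesis using Cons(2)[of i] by (simp add: coeff_monom)
  qed
qed simp

lemma Rp_nz: "length bs = length cs \<Longrightarrow> bs \<noteq> cs \<Longrightarrow> Rp bs cs \<noteq> 0"
proof (induct bs cs rule: list_induct2)
  case (Cons x xs y ys)
  show ?case
  proof (cases "x = y")
    case True
    then show ?thesis using Cons by simp
  next
    case False
    have "Polynomial.coeff (Rp xs ys) (Suc (length xs)) = 0" using Rp_deg[OF Cons(1)] by (simp add: coeff_eq_0)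
    then have "Polynomial.coeff (Rp (x # xs) (y # ys)) (Suc (length xs)) = of_bool x - of_bool y"
      by (simp add: coeff_monom)
    show ?thesis
    proof
      assume z: "Rp (x # xs) (y # ys) = 0"
      have "of_bool x - of_bool y = Polynomial.coeff (Rp (x # xs) (y # ys)) (Suc (length xs))"
        by (rule sym) fact
      also have "\<dots> = 0" by (simp only: z coeff_0)
      finally have "of_bool x - of_bool y = (0::int)" .
      with False show False by (cases x; cases y) auto
    qed
  qed
qed simp

lemma Rp_eval:
  assumes "length bs = length cs" and l0: "l \<noteq> 0"
  shows "posw l bs - posw l cs = (1 - l) * l ^ length bs * poly (map_poly of_int (Rp bs cs)) (1 / l)"
  using assms(1)
proof (induct bs cs rule: list_induct2)
  case (Cons x xs y ys)
  let ?j = "length xs"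
  let ?d = "real_of_int (of_bool x - of_bool y)"
  have "posw l (x # xs) - posw l (y # ys) = l * (posw l xs - posw l ys) + (1 - l) * ?d"
    by (cases x; cases y) (simp_all add: algebra_simps)
  also have "\<dots> = l * ((1 - l) * l ^ ?j * poly (map_poly of_int (Rp xs ys)) (1 / l)) + (1 - l) * ?d"
    by (simp only: Cons(2))
  also have "\<dots> = (1 - l) * l ^ Suc ?j * (poly (map_poly of_int (Rp xs ys)) (1 / l) + ?d * (1 / l) ^ Suc ?j)"
    using l0 by (simp add: field_simps power_divide)
  also have "poly (map_poly of_int (Rp xs ys)) (1 / l) + ?d * (1 / l) ^ Suc ?j
      = poly (map_poly of_int (Rp (x # xs) (y # ys))) (1 / l)"
    by (simp add: poly_monom map_poly_monom of_int_hom.map_poly_hom_add)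
  finally show ?case by simp
qed simp



lemma sep:
  assumes l1: "1/2 < l" and l2: "l < 1" and g: "garsia_number (1/l)"
  shows "\<exists>c1>0. \<forall>bs cs. length bs = length cs \<longrightarrow> bs \<noteq> cs \<longrightarrow>
           \<bar>posw l bs - posw l cs\<bar> \<ge> c1 * (1/2) ^ length bs"
proof -
  from g obtain p :: "int poly" where lc: "lead_coeff p = 1" and irr: "irreducible p"
    and root: "poly (map_poly of_int p) (1/l) = 0" and p0: "\<bar>Polynomial.coeff p 0\<bar> = 2"
    and conj: "\<And>z::complex. poly (map_poly of_int p) z = 0 \<Longrightarrow> cmod z > 1"
    unfolding garsia_number_def by blast
  have lpos: "l > 0" using l1 by simp
  from garsia_sep[OF lc irr root p0 conj] lpos obtain c where c: "c > 0"
    and cb: "\<And>R m. R \<noteq> 0 \<Longrightarrow> (\<forall>i. \<bar>Polynomial.coeff R i\<bar> \<le> 1) \<Longrightarrow> degree R \<le> m \<Longrightarrow>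
     \<bar>poly (map_poly of_int R) (1/l)\<bar> \<ge> c * (1/l / 2) ^ m"
    by auto
  show ?thesis
  proof (intro exI[of _ "(1 - l) * c"] conjI allI impI)
    show "0 < (1 - l) * c" using c l2 by simp
    fix bs cs :: "bool list"
    assume len: "length bs = length cs" and ne: "bs \<noteq> cs"
    let ?m = "length bs"
    have b: "\<bar>poly (map_poly of_int (Rp bs cs)) (1/l)\<bar> \<ge> c * (1/l / 2) ^ ?m"
      by (rule cb[OF Rp_nz[OF len ne]]) (use Rp_coeff[OF len] Rp_deg[OF len] in auto)
    have "\<bar>posw l bs - posw l cs\<bar> = (1 - l) * l ^ ?m * \<bar>poly (map_poly of_int (Rp bs cs)) (1/l)\<bar>"
    proof -
      have e: "posw l bs - posw l cs = (1 - l) * l ^ ?m * poly (map_poly of_int (Rp bs cs)) (1 / l)"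
        by (rule Rp_eval[OF len]) (use lpos in simp)
      show ?thesis unfolding e using lpos l2 by (simp add: abs_mult)
    qed
    also have "\<dots> \<ge> (1 - l) * l ^ ?m * (c * (1/l / 2) ^ ?m)"
      by (rule mult_left_mono[OF b]) (use lpos l2 in simp)
    also have "(1 - l) * l ^ ?m * (c * (1/l / 2) ^ ?m) = (1 - l) * c * (1/2) ^ ?m"
      using lpos by (simp add: power_divide field_simps)
    finally show "(1 - l) * c * (1 / 2) ^ ?m \<le> \<bar>posw l bs - posw l cs\<bar>" .
  qed
qed

lemma posw_bounds: "0 \<le> l \<Longrightarrow> l \<le> 1 \<Longrightarrow> 0 \<le> posw l bs \<and> posw l bs \<le> 1"
proof (induct bs)
  case (Cons b bs)
  then have "0 \<le> l * posw l bs" "l * posw l bs \<le> l" by (auto intro: mult_left_le)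
  then show ?case using Cons by auto
qed simp

context
  fixes l :: real and F :: "(real \<times> real) set"
  assumes l1: "1/2 < l" and l2: "l < 1"
    and Fsub: "F \<subseteq> {0..1} \<times> {0..1}"
    and Feq: "F = (\<lambda>(x, y). (l * x, l * y)) ` F
            \<union> (\<lambda>(x, y). (l * x + (1 - l), l * y)) ` F
            \<union> ({0} \<times> {0..1})"
begin

lemma seg_in_F: "{posw l bs} \<times> {0..l ^ length bs} \<subseteq> F"
proof (induct bs)
  case Nil
  show ?case using Feq by (simp, blast)
next
  case (Cons b bs)
  have lpos: "l > 0" using l1 by simp
  show ?case
  proof
    fix z assume "z \<in> {posw l (b # bs)} \<times> {0..l ^ length (b # bs)}"
    then obtain y where z: "z = (posw l (b # bs), y)" and y: "0 \<le> y" "y \<le> l ^ Suc (length bs)" by auto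
    have y': "(posw l bs, y / l) \<in> F"
      using Cons y lpos by (auto simp: field_simps)
    show "z \<in> F"
    proof (cases b)
      case True
      have "z = (\<lambda>(x, y). (l * x + (1 - l), l * y)) (posw l bs, y / l)" using z True lpos by simp
      then have "z \<in> (\<lambda>(x, y). (l * x + (1 - l), l * y)) ` F" using y' by blast
      then show ?thesis by (subst Feq) blast
    next
      case False
      have "z = (\<lambda>(x, y). (l * x, l * y)) (posw l bs, y / l)" using z False lpos by simp
      then have "z \<in> (\<lambda>(x, y). (l * x, l * y)) ` F" using y' by blast
      then show ?thesis by (subst Feq) blast
    qed
  qed
qed

lemma F_cover: "F \<subseteq> {(x, y). \<exists>bs. length bs < n \<and> x = posw l bs \<and> 0 \<le> y \<and> y \<le> l ^ length bs}
                   \<union> ({0..1} \<times> {0..l ^ n})"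
proof (induct n)
  case 0
  then show ?case using Fsub by simp
next
  case (Suc n)
  have lpos: "l > 0" using l1 by simp
  let ?A = "\<lambda>n. {(x, y). \<exists>bs. length bs < n \<and> x = posw l bs \<and> 0 \<le> y \<and> y \<le> l ^ length bs}"
  have step: "(l * x + (if b then 1 - l else 0), l * y) \<in> ?A (Suc n) \<union> ({0..1} \<times> {0..l ^ Suc n})"
    if "(x, y) \<in> F" for x y b
  proof -
    from that Suc have "(x, y) \<in> ?A n \<union> ({0..1} \<times> {0..l ^ n})" by blast
    then show ?thesis
    proof
      assume "(x, y) \<in> ?A n"
      then obtain bs where bs: "length bs < n" "x = posw l bs" "0 \<le> y" "y \<le> l ^ length bs" by auto
      have "length (b # bs) < Suc n" "l * x + (if b then 1 - l else 0) = posw l (b # bs)"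
        "0 \<le> l * y" "l * y \<le> l ^ length (b # bs)" using bs lpos by auto
      then show ?thesis by blast
    next
      assume "(x, y) \<in> {0..1} \<times> {0..l ^ n}"
      then have "0 \<le> x" "x \<le> 1" "0 \<le> y" "y \<le> l ^ n" by auto
      moreover have "l * x \<le> l" using \<open>x \<le> 1\<close> lpos by (intro mult_left_le) auto
      ultimately have "0 \<le> l * x + (if b then 1 - l else 0)" "l * x + (if b then 1 - l else 0) \<le> 1"
        "0 \<le> l * y" "l * y \<le> l ^ Suc n" using lpos l2 by (auto split: if_splits, linarith)
      then show ?thesis by auto
    qed
  qed
  show ?case
  proof
    fix z assume "z \<in> F"
    then have "z \<in> (\<lambda>(x, y). (l * x, l * y)) ` F
            \<union> (\<lambda>(x, y). (l * x + (1 - l), l * y)) ` F \<union> ({0} \<times> {0..1})" using Feq by blast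
    then show "z \<in> ?A (Suc n) \<union> ({0..1} \<times> {0..l ^ Suc n})"
    proof (elim UnE)
      assume "z \<in> (\<lambda>(x, y). (l * x, l * y)) ` F"
      then obtain x y where "(x, y) \<in> F" "z = (l * x, l * y)" by auto
      then show ?thesis using step[of x y False] by simp
    next
      assume "z \<in> (\<lambda>(x, y). (l * x + (1 - l), l * y)) ` F"
      then obtain x y where "(x, y) \<in> F" "z = (l * x + (1 - l), l * y)" by auto
      then show ?thesis using step[of x y True] by simp
    next
      assume "z \<in> {0} \<times> {0..1}"
      then obtain y where "z = (0, y)" "0 \<le> y" "y \<le> 1" by auto
      then have "z \<in> ?A (Suc n)" by (auto intro!: exI[of _ "[]"])
      then show ?thesis by blast
    qed
  qed
qed

end


lemma card_words: "card {bs :: bool list. length bs = k} = 2 ^ k"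
proof -
  have "card {bs :: bool list. set bs \<subseteq> UNIV \<and> length bs = k} = card (UNIV :: bool set) ^ k"
    by (rule card_lists_length_eq) simp
  then show ?thesis by simp
qed

lemma finite_words: "finite {bs :: bool list. length bs = k}"
proof -
  have "finite {bs :: bool list. set bs \<subseteq> UNIV \<and> length bs = k}"
    by (rule finite_lists_length_eq) simp
  then show ?thesis by simp
qed

lemma floor_eq_close: "(\<delta>::real) > 0 \<Longrightarrow> \<lfloor>a / \<delta>\<rfloor> = \<lfloor>b / \<delta>\<rfloor> \<Longrightarrow> \<bar>a - b\<bar> < \<delta>"
proof -
  assume d: "\<delta> > 0" and e: "\<lfloor>a / \<delta>\<rfloor> = \<lfloor>b / \<delta>\<rfloor>"
  have "real_of_int \<lfloor>a / \<delta>\<rfloor> \<le> a / \<delta>" "a / \<delta> < real_of_int \<lfloor>a / \<delta>\<rfloor> + 1"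
       "real_of_int \<lfloor>b / \<delta>\<rfloor> \<le> b / \<delta>" "b / \<delta> < real_of_int \<lfloor>b / \<delta>\<rfloor> + 1"
    by (simp_all add: of_int_floor_le real_of_int_floor_add_one_gt)
  moreover have "real_of_int \<lfloor>a / \<delta>\<rfloor> = real_of_int \<lfloor>b / \<delta>\<rfloor>" using e by simp
  ultimately have "\<bar>a / \<delta> - b / \<delta>\<bar> < 1" unfolding abs_less_iff by linarith
  moreover have "(a - b) / \<delta> = a / \<delta> - b / \<delta>" by (rule diff_divide_distrib)
  ultimately have lt: "\<bar>(a - b) / \<delta>\<bar> < 1" by simp
  have "\<bar>a - b\<bar> = \<bar>(a - b) / \<delta>\<bar> * \<delta>" using d by (simp add: abs_divide)
  also have "\<dots> < 1 * \<delta>" by (rule mult_strict_right_mono[OF lt d])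
  finally show ?thesis by simp
qed

lemma floor_range: "(\<delta>::real) > 0 \<Longrightarrow> 0 \<le> x \<Longrightarrow> x \<le> c \<Longrightarrow> \<lfloor>x / \<delta>\<rfloor> \<in> {0..\<lfloor>c / \<delta>\<rfloor>}"
  by (auto intro!: floor_mono divide_right_mono)

lemma nat_floor_bound: "0 \<le> (t::real) \<Longrightarrow> real (nat (\<lfloor>t\<rfloor> + 1)) \<le> t + 1"
proof -
  assume t: "0 \<le> t"
  then have "0 \<le> \<lfloor>t\<rfloor> + 1" by simp
  then have "real (nat (\<lfloor>t\<rfloor> + 1)) = real_of_int (\<lfloor>t\<rfloor> + 1)" by simp
  also have "\<dots> \<le> t + 1" using of_int_floor_le[of t] by simp
  finally show ?thesis .
qed

context
  fixes l :: real and F :: "(real \<times> real) set"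
  assumes l1: "1/2 < l" and l2: "l < 1"
    and Fsub: "F \<subseteq> {0..1} \<times> {0..1}"
    and Feq: "F = (\<lambda>(x, y). (l * x, l * y)) ` F
            \<union> (\<lambda>(x, y). (l * x + (1 - l), l * y)) ` F
            \<union> ({0} \<times> {0..1})"
begin

lemma mesh_sub: "\<delta> > 0 \<Longrightarrow> (\<lambda>p. (\<lfloor>fst p / \<delta>\<rfloor>, \<lfloor>snd p / \<delta>\<rfloor>)) ` F \<subseteq> {0..\<lfloor>1/\<delta>\<rfloor>} \<times> {0..\<lfloor>1/\<delta>\<rfloor>}"
  using Fsub floor_range[of \<delta> _ 1] by fastforce

lemma mesh_finite: "\<delta> > 0 \<Longrightarrow> finite ((\<lambda>p. (\<lfloor>fst p / \<delta>\<rfloor>, \<lfloor>snd p / \<delta>\<rfloor>)) ` F)"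
  by (rule finite_subset[OF mesh_sub]) (auto intro: finite_cartesian_product)

lemma lower_count:
  assumes d: "\<delta> > 0"
    and sepk: "\<And>bs cs. length bs = k \<Longrightarrow> length cs = k \<Longrightarrow> bs \<noteq> cs \<Longrightarrow> \<bar>posw l bs - posw l cs\<bar> \<ge> \<delta>"
  shows "real (mesh_count \<delta> F) \<ge> 2 ^ k * (l ^ k / \<delta>)"
proof -
  let ?W = "{bs :: bool list. length bs = k}"
  let ?col = "\<lambda>bs. \<lfloor>posw l bs / \<delta>\<rfloor>"
  let ?M = "(\<lambda>p. (\<lfloor>fst p / \<delta>\<rfloor>, \<lfloor>snd p / \<delta>\<rfloor>)) ` F"
  let ?Q = "?col ` ?W \<times> {0..\<lfloor>l ^ k / \<delta>\<rfloor>}"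
  have lpos: "l > 0" using l1 by simp
  have inj: "inj_on ?col ?W"
  proof (rule inj_onI)
    fix bs cs assume "bs \<in> ?W" "cs \<in> ?W" and e: "?col bs = ?col cs"
    show "bs = cs"
    proof (rule ccontr)
      assume "bs \<noteq> cs"
      then have "\<bar>posw l bs - posw l cs\<bar> \<ge> \<delta>" using sepk \<open>bs \<in> ?W\<close> \<open>cs \<in> ?W\<close> by auto
      moreover have "\<bar>posw l bs - posw l cs\<bar> < \<delta>" by (rule floor_eq_close[OF d e])
      ultimately show False by simp
    qed
  qed
  have QM: "?Q \<subseteq> ?M"
  proof
    fix q assume "q \<in> ?Q"
    then obtain bs j where bs: "length bs = k" and q: "q = (?col bs, j)" and j: "0 \<le> j" "j \<le> \<lfloor>l ^ k / \<delta>\<rfloor>"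
      by auto
    have "real_of_int j \<le> l ^ k / \<delta>" using j(2) by linarith
    then have jd: "real_of_int j * \<delta> \<le> l ^ k" using d by (simp add: field_simps)
    have "(posw l bs, real_of_int j * \<delta>) \<in> F"
      using seg_in_F[OF l1 l2 Fsub Feq, of bs] bs jd j(1) d by auto
    moreover have "q = (\<lambda>p. (\<lfloor>fst p / \<delta>\<rfloor>, \<lfloor>snd p / \<delta>\<rfloor>)) (posw l bs, real_of_int j * \<delta>)"
      using q d by simp
    ultimately show "q \<in> ?M" by blast
  qed
  have cQ: "card ?Q = 2 ^ k * nat (\<lfloor>l ^ k / \<delta>\<rfloor> + 1)"
    by (simp add: card_cartesian_product card_image[OF inj] card_words)
  have "card ?Q \<le> card ?M" by (rule card_mono[OF mesh_finite[OF d] QM])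
  then have "2 ^ k * nat (\<lfloor>l ^ k / \<delta>\<rfloor> + 1) \<le> mesh_count \<delta> F"
    unfolding mesh_count_def cQ by simp
  then have h1: "real (2 ^ k * nat (\<lfloor>l ^ k / \<delta>\<rfloor> + 1)) \<le> real (mesh_count \<delta> F)"
    by (simp only: of_nat_le_iff)
  have t0: "0 \<le> l ^ k / \<delta>" using lpos d by simp
  then have "0 \<le> \<lfloor>l ^ k / \<delta>\<rfloor> + 1" by simp
  then have "real (nat (\<lfloor>l ^ k / \<delta>\<rfloor> + 1)) = real_of_int (\<lfloor>l ^ k / \<delta>\<rfloor> + 1)" by simp
  moreover have "l ^ k / \<delta> \<le> real_of_int (\<lfloor>l ^ k / \<delta>\<rfloor> + 1)"
    using real_of_int_floor_add_one_ge[of "l ^ k / \<delta>"] by simp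
  ultimately have h2: "l ^ k / \<delta> \<le> real (nat (\<lfloor>l ^ k / \<delta>\<rfloor> + 1))" by simp
  have "2 ^ k * (l ^ k / \<delta>) \<le> 2 ^ k * real (nat (\<lfloor>l ^ k / \<delta>\<rfloor> + 1))"
    by (rule mult_left_mono[OF h2]) simp
  also have "\<dots> = real (2 ^ k * nat (\<lfloor>l ^ k / \<delta>\<rfloor> + 1))" by simp
  also have "\<dots> \<le> real (mesh_count \<delta> F)" by (rule h1)
  finally show ?thesis .
qed


lemma upper_count:
  assumes d: "0 < \<delta>" "\<delta> \<le> 1" and n1: "l ^ n \<le> \<delta>" and n2: "\<And>j. j < n \<Longrightarrow> \<delta> < l ^ j"
  shows "real (mesh_count \<delta> F) \<le> 4 / \<delta> + (\<Sum>j<n. min (2 ^ j) (2 / \<delta>) * (2 * l ^ j / \<delta>))"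
proof -
  have lpos: "l > 0" using l1 by simp
  let ?M = "(\<lambda>p. (\<lfloor>fst p / \<delta>\<rfloor>, \<lfloor>snd p / \<delta>\<rfloor>)) ` F"
  define Col where "Col j = (\<lambda>bs. \<lfloor>posw l bs / \<delta>\<rfloor>) ` {bs :: bool list. length bs = j}" for j
  define Bot where "Bot = {0..\<lfloor>1 / \<delta>\<rfloor>} \<times> {0..\<lfloor>l ^ n / \<delta>\<rfloor>}"
  define Seg where "Seg j = Col j \<times> {0..\<lfloor>l ^ j / \<delta>\<rfloor>}" for j
  have MC: "?M \<subseteq> Bot \<union> (\<Union>j\<in>{..<n}. Seg j)"
  proof
    fix q assume "q \<in> ?M"
    then obtain x y where xy: "(x, y) \<in> F" and q: "q = (\<lfloor>x / \<delta>\<rfloor>, \<lfloor>y / \<delta>\<rfloor>)" by auto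
    from xy F_cover[OF l1 l2 Fsub Feq, of n]
    have "(x, y) \<in> {(x, y). \<exists>bs. length bs < n \<and> x = posw l bs \<and> 0 \<le> y \<and> y \<le> l ^ length bs}
                   \<union> ({0..1} \<times> {0..l ^ n})" by blast
    then show "q \<in> Bot \<union> (\<Union>j\<in>{..<n}. Seg j)"
    proof
      assume "(x, y) \<in> {(x, y). \<exists>bs. length bs < n \<and> x = posw l bs \<and> 0 \<le> y \<and> y \<le> l ^ length bs}"
      then obtain bs where bs: "length bs < n" "x = posw l bs" "0 \<le> y" "y \<le> l ^ length bs" by auto
      have "\<lfloor>x / \<delta>\<rfloor> \<in> Col (length bs)" unfolding Col_def using bs by auto
      moreover have "\<lfloor>y / \<delta>\<rfloor> \<in> {0..\<lfloor>l ^ length bs / \<delta>\<rfloor>}" by (rule floor_range[OF d(1) bs(3,4)])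
      ultimately have "q \<in> Seg (length bs)" unfolding Seg_def q by simp
      then show ?thesis using bs(1) by blast
    next
      assume "(x, y) \<in> {0..1} \<times> {0..l ^ n}"
      then have "\<lfloor>x / \<delta>\<rfloor> \<in> {0..\<lfloor>1 / \<delta>\<rfloor>}" "\<lfloor>y / \<delta>\<rfloor> \<in> {0..\<lfloor>l ^ n / \<delta>\<rfloor>}"
        using floor_range[OF d(1)] by auto
      then show ?thesis unfolding Bot_def q by blast
    qed
  qed
  have finCol: "finite (Col j)" for j unfolding Col_def by (rule finite_imageI[OF finite_words])
  have finSeg: "finite (Seg j)" for j unfolding Seg_def using finCol by simp
  have finBot: "finite Bot" unfolding Bot_def by simp
  have "card ?M \<le> card (Bot \<union> (\<Union>j\<in>{..<n}. Seg j))"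
    by (rule card_mono[OF _ MC]) (use finSeg finBot in auto)
  also have "\<dots> \<le> card Bot + card (\<Union>j\<in>{..<n}. Seg j)" by (rule card_Un_le)
  also have "card (\<Union>j\<in>{..<n}. Seg j) \<le> (\<Sum>j<n. card (Seg j))" by (rule card_UN_le) simp
  finally have c1: "real (mesh_count \<delta> F) \<le> real (card Bot) + (\<Sum>j<n. real (card (Seg j)))"
    unfolding mesh_count_def by (simp add: of_nat_sum[symmetric] del: of_nat_sum)
  have inv0: "0 \<le> 1 / \<delta>" using d by simp
  have b1: "real (nat (\<lfloor>1 / \<delta>\<rfloor> + 1)) \<le> 2 / \<delta>"
  proof -
    have "real (nat (\<lfloor>1 / \<delta>\<rfloor> + 1)) \<le> 1 / \<delta> + 1" by (rule nat_floor_bound[OF inv0])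
    also have "\<dots> \<le> 2 / \<delta>" using d by (simp add: field_simps)
    finally show ?thesis .
  qed
  have "real (card Bot) = real (nat (\<lfloor>1 / \<delta>\<rfloor> + 1)) * real (nat (\<lfloor>l ^ n / \<delta>\<rfloor> + 1))"
    unfolding Bot_def by (simp add: card_cartesian_product)
  also have "\<dots> \<le> (2 / \<delta>) * 2"
  proof (rule mult_mono[OF b1])
    have "real (nat (\<lfloor>l ^ n / \<delta>\<rfloor> + 1)) \<le> l ^ n / \<delta> + 1" by (rule nat_floor_bound) (use d lpos in simp)
    also have "l ^ n / \<delta> \<le> 1" using n1 d by simp
    finally show "real (nat (\<lfloor>l ^ n / \<delta>\<rfloor> + 1)) \<le> 2" by simp
  qed (use d in auto)
  finally have cBot: "real (card Bot) \<le> 4 / \<delta>" by simp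
  have cSeg: "real (card (Seg j)) \<le> min (2 ^ j) (2 / \<delta>) * (2 * l ^ j / \<delta>)" if j: "j < n" for j
  proof -
    have ca: "card (Col j) \<le> 2 ^ j" unfolding Col_def using card_image_le[OF finite_words, of _ j] card_words[of j] by simp
    have "Col j \<subseteq> {0..\<lfloor>1 / \<delta>\<rfloor>}" unfolding Col_def
      using posw_bounds[of l] lpos l2 floor_range[OF d(1), of _ 1] by auto
    then have "card (Col j) \<le> card {0..\<lfloor>1 / \<delta>\<rfloor>}" by (rule card_mono[rotated]) simp
    then have "real (card (Col j)) \<le> real (nat (\<lfloor>1 / \<delta>\<rfloor> + 1))" by simp
    with b1 have cb: "real (card (Col j)) \<le> 2 / \<delta>" by linarith
    from ca have "real (card (Col j)) \<le> real (2 ^ j)" by (simp only: of_nat_le_iff)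
    then have "real (card (Col j)) \<le> 2 ^ j" by simp
    with cb have cc: "real (card (Col j)) \<le> min (2 ^ j) (2 / \<delta>)" by simp
    have "real (nat (\<lfloor>l ^ j / \<delta>\<rfloor> + 1)) \<le> l ^ j / \<delta> + 1" by (rule nat_floor_bound) (use d lpos in simp)
    also have "1 \<le> l ^ j / \<delta>" using n2[OF j] d by simp
    then have "l ^ j / \<delta> + 1 \<le> 2 * l ^ j / \<delta>" by simp
    finally have ci: "real (nat (\<lfloor>l ^ j / \<delta>\<rfloor> + 1)) \<le> 2 * l ^ j / \<delta>" .
    have "real (card (Seg j)) = real (card (Col j)) * real (nat (\<lfloor>l ^ j / \<delta>\<rfloor> + 1))"
      unfolding Seg_def by (simp add: card_cartesian_product)
    also have "\<dots> \<le> min (2 ^ j) (2 / \<delta>) * (2 * l ^ j / \<delta>)"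
      by (rule mult_mono[OF cc ci]) (use d in auto)
    finally show ?thesis .
  qed
  have "(\<Sum>j<n. real (card (Seg j))) \<le> (\<Sum>j<n. min (2 ^ j) (2 / \<delta>) * (2 * l ^ j / \<delta>))"
    by (rule sum_mono) (use cSeg in auto)
  with c1 cBot show ?thesis by linarith
qed

end


lemma min_le_powr:
  fixes u v a :: real
  assumes u: "0 < u" and v: "0 < v" and a0: "0 \<le> a" and a1: "a \<le> 1"
  shows "min u v \<le> u powr a * v powr (1 - a)"
proof (cases "u \<le> v")
  case True
  have "u = u powr a * u powr (1 - a)" using u by (simp add: powr_add[symmetric])
  also have "\<dots> \<le> u powr a * v powr (1 - a)"
    by (rule mult_left_mono[OF powr_mono2]) (use True u a1 in auto)
  finally show ?thesis using True by simp
next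
  case False
  have "v = v powr a * v powr (1 - a)" using v by (simp add: powr_add[symmetric])
  also have "\<dots> \<le> u powr a * v powr (1 - a)"
    by (rule mult_right_mono[OF powr_mono2]) (use False v a0 in auto)
  finally show ?thesis using False by simp
qed

context
  fixes l :: real and F :: "(real \<times> real) set"
  assumes l1: "1/2 < l" and l2: "l < 1"
    and Fsub: "F \<subseteq> {0..1} \<times> {0..1}"
    and Feq: "F = (\<lambda>(x, y). (l * x, l * y)) ` F
            \<union> (\<lambda>(x, y). (l * x + (1 - l), l * y)) ` F
            \<union> ({0} \<times> {0..1})"
begin

lemma lower_ln:
  assumes g: "garsia_number (1/l)"
  shows "\<exists>c1>0. \<forall>\<delta>. 0 < \<delta> \<and> \<delta> \<le> c1 \<longrightarrow> mesh_count \<delta> F > 0 \<and>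
     ln (real (mesh_count \<delta> F)) \<ge> ((ln c1 - ln \<delta>) / ln 2 - 1) * ln (2 * l) - ln \<delta>"
proof -
  obtain c1 where c1: "c1 > 0" and sepc: "\<And>bs cs. length bs = length cs \<Longrightarrow> bs \<noteq> cs \<Longrightarrow>
           \<bar>posw l bs - posw l cs\<bar> \<ge> c1 * (1/2) ^ length bs"
    using sep[OF l1 l2 g] by blast
  have lpos: "l > 0" using l1 by simp
  show ?thesis
  proof (intro exI[of _ c1] conjI allI impI c1)
    fix \<delta> :: real assume "0 < \<delta> \<and> \<delta> \<le> c1"
    then have d: "0 < \<delta>" "\<delta> \<le> c1" by auto
    define lg where "lg = log 2 (c1 / \<delta>)"
    have lg0: "0 \<le> lg" unfolding lg_def using d by simp
    define k where "k = nat \<lfloor>lg\<rfloor>"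
    have kr: "real k = real_of_int \<lfloor>lg\<rfloor>" unfolding k_def using lg0 by simp
    have k1: "real k \<le> lg" "lg - 1 < real k" unfolding kr by linarith+
    have "(2::real) ^ k = 2 powr (real k)" by (simp add: powr_realpow)
    also have "\<dots> \<le> 2 powr lg" by (rule powr_mono[OF k1(1)]) simp
    also have "\<dots> = c1 / \<delta>" unfolding lg_def using d c1 by simp
    finally have pk: "(2::real) ^ k \<le> c1 / \<delta>" .
    have dk: "\<delta> \<le> c1 * (1/2) ^ k"
      using pk d by (simp add: power_divide field_simps)
    have sepk: "\<bar>posw l bs - posw l cs\<bar> \<ge> \<delta>" if "length bs = k" "length cs = k" "bs \<noteq> cs" for bs cs
      using sepc[of bs cs] that dk by auto
    have N: "real (mesh_count \<delta> F) \<ge> 2 ^ k * (l ^ k / \<delta>)"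
      by (rule lower_count[OF l1 l2 Fsub Feq d(1) sepk])
    have pos: "2 ^ k * (l ^ k / \<delta>) > 0" using lpos d by simp
    have "0 < real (mesh_count \<delta> F)" using N pos by linarith
    then show "mesh_count \<delta> F > 0" by simp
    have e1: "ln (2 ^ k * (l ^ k / \<delta>)) = ln ((2::real) ^ k) + ln (l ^ k / \<delta>)"
      by (rule ln_mult_pos) (use lpos d in simp_all)
    have e2: "ln (l ^ k / \<delta>) = ln (l ^ k) - ln \<delta>" by (rule ln_divide_pos) (use lpos d in simp_all)
    have e3: "ln ((2::real) ^ k) = real k * ln 2" by (rule ln_realpow)
    have e4: "ln (l ^ k) = real k * ln l" by (rule ln_realpow)
    have e5: "ln (2 * l) = ln 2 + ln l" by (rule ln_mult_pos) (use lpos in simp_all)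
    have "ln (2 ^ k * (l ^ k / \<delta>)) = real k * ln (2 * l) - ln \<delta>"
      unfolding e1 e2 e3 e4 e5 by (simp add: algebra_simps)
    moreover have "ln (2 ^ k * (l ^ k / \<delta>)) \<le> ln (real (mesh_count \<delta> F))"
      using N pos by simp
    moreover have "(lg - 1) * ln (2 * l) \<le> real k * ln (2 * l)"
      by (rule mult_right_mono) (use k1 l1 in auto)
    moreover have "lg = (ln c1 - ln \<delta>) / ln 2" unfolding lg_def log_def using d c1 by (simp add: ln_divide_pos)
    then have "((ln c1 - ln \<delta>) / ln 2 - 1) * ln (2 * l) = (lg - 1) * ln (2 * l)" by simp
    ultimately show "((ln c1 - ln \<delta>) / ln 2 - 1) * ln (2 * l) - ln \<delta> \<le> ln (real (mesh_count \<delta> F))"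
      by linarith
  qed
qed


lemma upper_ln:
  assumes d: "0 < \<delta>" "\<delta> \<le> exp (-1)" and Npos: "mesh_count \<delta> F > 0"
  shows "ln (real (mesh_count \<delta> F)) \<le> ln (4 * (1 / (- ln l) + 2)) + ln (- ln \<delta>) + ln (4 * l) / ln 2 * (- ln \<delta>)"
proof -
  have lpos: "l > 0" using l1 by simp
  have lnl: "ln l < 0" using lpos l2 by simp
  have "ln \<delta> \<le> ln (exp (-1))" using d by (subst ln_le_cancel_iff) auto
  then have Ld: "1 \<le> - ln \<delta>" by simp
  have "exp (-1::real) < 1" by simp
  then have d1: "\<delta> < 1" using d by linarith
  define a where "a = log 2 (1 / l)"
  have a2: "2 powr a = 1 / l" unfolding a_def using lpos by (simp add: powr_log_cancel)
  have aeq: "a = - ln l / ln 2" unfolding a_def log_def using lpos by (simp add: ln_div)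
  have a0: "0 < a" unfolding aeq using lnl by (intro divide_pos_pos) auto
  have "ln (2 * l) = ln 2 + ln l" by (rule ln_mult_pos) (use lpos in simp_all)
  moreover have "ln (2 * l) > 0" using l1 by simp
  ultimately have "- ln l < ln 2" by linarith
  moreover have ln2: "(0::real) < ln 2" by simp
  ultimately have a1: "a < 1" unfolding aeq by (simp only: divide_less_eq_1_pos)
  define D where "D = 2 - a"
  have ln4: "ln (4::real) = 2 * ln 2"
  proof -
    have "ln ((2::real) ^ 2) = real 2 * ln 2" by (rule ln_realpow)
    then show ?thesis by simp
  qed
  have Deq: "D = ln (4 * l) / ln 2"
  proof -
    have "ln (4 * l) = ln 4 + ln l" by (rule ln_mult_pos) (use lpos in simp_all)
    then have "ln (4 * l) / ln 2 = (2 * ln 2 + ln l) / ln 2" by (simp add: ln4)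
    also have "\<dots> = 2 + ln l / ln 2" by (simp add: add_divide_distrib)
    finally show ?thesis unfolding D_def aeq by simp
  qed
  obtain n0 where "l ^ n0 < \<delta>" using real_arch_pow_inv[OF d(1) l2] by blast
  then have exn: "\<exists>n. l ^ n \<le> \<delta>" by (auto intro: less_imp_le)
  define n where "n = (LEAST n. l ^ n \<le> \<delta>)"
  have n1: "l ^ n \<le> \<delta>" unfolding n_def by (rule LeastI_ex[OF exn])
  have n2: "\<delta> < l ^ j" if "j < n" for j
    using not_less_Least[of j "\<lambda>n. l ^ n \<le> \<delta>"] that unfolding n_def by auto
  have n0: "n \<noteq> 0" using n1 d1 by (cases n) auto
  have "\<delta> < l ^ (n - 1)" by (rule n2) (use n0 in simp)
  then have "ln \<delta> < ln (l ^ (n - 1))" using d lpos by simp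
  then have "ln \<delta> < real (n - 1) * ln l" by (simp add: ln_realpow)
  then have "real (n - 1) * (- ln l) < - ln \<delta>" by simp
  then have nb: "real (n - 1) < (- ln \<delta>) / (- ln l)" using lnl by (simp add: less_divide_eq)
  define K where "K = 1 / (- ln l) + 2"
  have "0 < 1 / (- ln l)" using lnl by (intro divide_pos_pos) auto
  then have Kpos: "K > 0" unfolding K_def by linarith
  have "real n + 1 = real (n - 1) + 2" using n0 by (cases n) auto
  also have "\<dots> \<le> (- ln \<delta>) / (- ln l) + 2 * (- ln \<delta>)" using nb Ld by linarith
  also have "\<dots> = K * (- ln \<delta>)" unfolding K_def by (simp add: field_simps)
  finally have nK: "real n + 1 \<le> K * (- ln \<delta>)" .
  have cnt: "real (mesh_count \<delta> F) \<le> 4 / \<delta> + (\<Sum>j<n. min (2 ^ j) (2 / \<delta>) * (2 * l ^ j / \<delta>))"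
    by (rule upper_count[OF l1 l2 Fsub Feq d(1) _ n1 n2]) (use d1 in auto)
  have tm: "min (2 ^ j) (2 / \<delta>) * (2 * l ^ j / \<delta>) \<le> 2 * ((2 / \<delta>) powr (1 - a) / \<delta>)" for j
  proof -
    have m: "min (2 ^ j) (2 / \<delta>) \<le> (2 ^ j) powr a * (2 / \<delta>) powr (1 - a)"
      by (rule min_le_powr) (use d a0 a1 in auto)
    have "((2::real) ^ j) powr a = (2 powr real j) powr a" by (simp add: powr_realpow)
    also have "\<dots> = (2 powr a) powr real j" by (simp add: powr_powr mult.commute)
    also have "\<dots> = (1 / l) ^ j" unfolding a2 using lpos by (simp add: powr_realpow)
    finally have pj: "((2::real) ^ j) powr a = (1 / l) ^ j" .
    have "min (2 ^ j) (2 / \<delta>) * (2 * l ^ j / \<delta>) \<le> (1 / l) ^ j * (2 / \<delta>) powr (1 - a) * (2 * l ^ j / \<delta>)"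
      by (rule mult_right_mono) (use m pj d lpos in auto)
    also have "\<dots> = ((1 / l) ^ j * l ^ j) * (2 * ((2 / \<delta>) powr (1 - a) / \<delta>))" by (simp add: divide_inverse mult_ac)
    also have "(1 / l) ^ j * l ^ j = 1" using lpos by (simp add: power_divide)
    finally show ?thesis by simp
  qed
  have sumb: "(\<Sum>j<n. min (2 ^ j) (2 / \<delta>) * (2 * l ^ j / \<delta>)) \<le> real n * (2 * ((2 / \<delta>) powr (1 - a) / \<delta>))"
    using sum_bounded_above[of "{..<n}" "\<lambda>j. min (2 ^ j) (2 / \<delta>) * (2 * l ^ j / \<delta>)", OF tm] by simp
  have P: "(2 / \<delta>) powr (1 - a) / \<delta> \<le> 2 * \<delta> powr (- D)"
  proof -
    have e1: "(2 / \<delta>) powr (1 - a) = 2 powr (1 - a) / \<delta> powr (1 - a)" using d by (simp add: powr_divide)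
    have e2: "\<delta> powr (1 - a) * \<delta> = \<delta> powr D"
    proof -
      have "\<delta> powr D = \<delta> powr ((1 - a) + 1)" unfolding D_def by (simp add: algebra_simps)
      also have "\<dots> = \<delta> powr (1 - a) * \<delta> powr 1" by (rule powr_add)
      also have "\<dots> = \<delta> powr (1 - a) * \<delta>" using d by simp
      finally show ?thesis by simp
    qed
    have e3: "1 / \<delta> powr D = \<delta> powr (- D)" using d by (simp add: powr_minus_divide)
    have "(2 / \<delta>) powr (1 - a) / \<delta> = 2 powr (1 - a) * (1 / (\<delta> powr (1 - a) * \<delta>))"
      unfolding e1 by simp
    also have "\<dots> = 2 powr (1 - a) * \<delta> powr (- D)" unfolding e2 e3 ..
    also have "\<dots> \<le> 2 powr 1 * \<delta> powr (- D)"
      by (rule mult_right_mono[OF powr_mono]) (use a0 in auto)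
    finally show ?thesis by simp
  qed
  have Q: "4 / \<delta> \<le> 4 * \<delta> powr (- D)"
  proof -
    have "\<delta> powr (-1) \<le> \<delta> powr (- D)" by (rule powr_mono') (use d d1 a1 in \<open>auto simp: D_def\<close>)
    then show ?thesis using d by (simp add: powr_minus_divide)
  qed
  have Dp: "\<delta> powr (- D) > 0" using d by simp
  have "real (mesh_count \<delta> F) \<le> 4 * \<delta> powr (- D) + real n * (2 * (2 * \<delta> powr (- D)))"
  proof -
    have "real n * (2 * ((2 / \<delta>) powr (1 - a) / \<delta>)) \<le> real n * (2 * (2 * \<delta> powr (- D)))"
      by (rule mult_left_mono) (use P in auto)
    then show ?thesis using cnt sumb Q by linarith
  qed
  also have "\<dots> = 4 * (real n + 1) * \<delta> powr (- D)" by (simp add: algebra_simps)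
  also have "\<dots> \<le> 4 * (K * (- ln \<delta>)) * \<delta> powr (- D)"
    by (intro mult_right_mono mult_left_mono nK) (use Dp in auto)
  finally have Nb: "real (mesh_count \<delta> F) \<le> (4 * K) * (- ln \<delta>) * \<delta> powr (- D)" by (simp add: mult.assoc)
  have Np: "0 < real (mesh_count \<delta> F)" using Npos by simp
  have "ln (real (mesh_count \<delta> F)) \<le> ln ((4 * K) * (- ln \<delta>) * \<delta> powr (- D))"
    using Nb Np by simp
  also have "\<dots> = ln ((4 * K) * (- ln \<delta>)) + ln (\<delta> powr (- D))"
  proof (rule ln_mult_pos)
    show "0 < 4 * K * - ln \<delta>" using Kpos Ld by (intro mult_pos_pos) auto
  qed (use Dp in simp)
  also have "ln ((4 * K) * (- ln \<delta>)) = ln (4 * K) + ln (- ln \<delta>)"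
    by (rule ln_mult_pos) (use Kpos Ld in simp_all)
  also have "ln (\<delta> powr (- D)) = D * (- ln \<delta>)" using d by (simp add: ln_powr)
  finally show ?thesis unfolding K_def Deq .
qed

end


lemma main_tendsto:
  fixes l :: real and F :: "(real \<times> real) set"
  assumes l1: "1/2 < l" and l2: "l < 1"
    and Fsub: "F \<subseteq> {0..1} \<times> {0..1}"
    and Feq: "F = (\<lambda>(x, y). (l * x, l * y)) ` F
            \<union> (\<lambda>(x, y). (l * x + (1 - l), l * y)) ` F
            \<union> ({0} \<times> {0..1})"
    and g: "garsia_number (1/l)"
  shows "((\<lambda>\<delta>. ln (real (mesh_count \<delta> F)) / (- ln \<delta>)) \<longlongrightarrow> ln (4 * l) / ln 2) (at_right 0)"
proof -
  obtain c1 where c1: "c1 > 0" and low: "\<And>\<delta>. 0 < \<delta> \<Longrightarrow> \<delta> \<le> c1 \<Longrightarrow> mesh_count \<delta> F > 0 \<and>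
     ln (real (mesh_count \<delta> F)) \<ge> ((ln c1 - ln \<delta>) / ln 2 - 1) * ln (2 * l) - ln \<delta>"
    using lower_ln[OF l1 l2 Fsub Feq g] by blast
  have lpos: "l > 0" using l1 by simp
  define D where "D = ln (4 * l) / ln 2"
  define K where "K = 1 / (- ln l) + 2"
  have ln2l: "ln (2 * l) = ln 2 + ln l" by (rule ln_mult_pos) (use lpos in simp_all)
  have ln4l: "ln (4 * l) = ln 2 + ln (2 * l)"
  proof -
    have "ln (2 * (2 * l)) = ln 2 + ln (2 * l)" by (rule ln_mult_pos) (use lpos in simp_all)
    then show ?thesis by simp
  qed
  have D2: "D = ln (2 * l) / ln 2 + 1" unfolding D_def ln4l by (simp add: add_divide_distrib)
  define A where "A = (ln c1 / ln 2 - 1) * ln (2 * l)"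
  define Lf where "Lf = (\<lambda>\<delta>::real. A * (1 / (- ln \<delta>)) + D)"
  define Uf where "Uf = (\<lambda>\<delta>::real. ln (4 * K) * (1 / (- ln \<delta>)) + ln (- ln \<delta>) / (- ln \<delta>) + D)"
  let ?f = "\<lambda>\<delta>. ln (real (mesh_count \<delta> F)) / (- ln \<delta>)"
  have inv0: "((\<lambda>x::real. 1 / (- ln x)) \<longlongrightarrow> 0) (at_right 0)" by real_asymp
  have lnln0: "((\<lambda>x::real. ln (- ln x) / (- ln x)) \<longlongrightarrow> 0) (at_right 0)" by real_asymp
  have Llim: "(Lf \<longlongrightarrow> D) (at_right 0)"
    unfolding Lf_def using tendsto_add[OF tendsto_mult[OF tendsto_const inv0] tendsto_const[of D]] by simp
  have Ulim: "(Uf \<longlongrightarrow> D) (at_right 0)"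
    unfolding Uf_def using tendsto_add[OF tendsto_add[OF tendsto_mult[OF tendsto_const inv0] lnln0] tendsto_const[of D]]
    by simp
  define b where "b = min c1 (exp (-1))"
  have bpos: "b > 0" unfolding b_def using c1 by simp
  have reg: "Lf \<delta> \<le> ?f \<delta> \<and> ?f \<delta> \<le> Uf \<delta>" if d: "0 < \<delta>" "\<delta> < b" for \<delta>
  proof -
    have dc: "\<delta> \<le> c1" "\<delta> \<le> exp (-1)" using d unfolding b_def by auto
    from low[OF d(1) dc(1)] have Np: "mesh_count \<delta> F > 0"
      and lo: "ln (real (mesh_count \<delta> F)) \<ge> ((ln c1 - ln \<delta>) / ln 2 - 1) * ln (2 * l) - ln \<delta>" by auto
    have up: "ln (real (mesh_count \<delta> F)) \<le> ln (4 * K) + ln (- ln \<delta>) + D * (- ln \<delta>)"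
      using upper_ln[OF l1 l2 Fsub Feq d(1) dc(2) Np] unfolding K_def D_def .
    have "ln \<delta> \<le> ln (exp (-1))" using d dc by (subst ln_le_cancel_iff) auto
    then have t: "0 < - ln \<delta>" by simp
    have "Lf \<delta> = (((ln c1 - ln \<delta>) / ln 2 - 1) * ln (2 * l) - ln \<delta>) / (- ln \<delta>)"
      unfolding Lf_def A_def D2 using t by (simp add: field_simps)
    also have "\<dots> \<le> ?f \<delta>" by (rule divide_right_mono[OF lo]) (use t in simp)
    finally have L: "Lf \<delta> \<le> ?f \<delta>" .
    have "?f \<delta> \<le> (ln (4 * K) + ln (- ln \<delta>) + D * (- ln \<delta>)) / (- ln \<delta>)"
      by (rule divide_right_mono[OF up]) (use t in simp)
    also have "\<dots> = Uf \<delta>" unfolding Uf_def using t by (simp add: field_simps)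
    finally show ?thesis using L by simp
  qed
  have ev: "eventually (\<lambda>\<delta>. Lf \<delta> \<le> ?f \<delta> \<and> ?f \<delta> \<le> Uf \<delta>) (at_right 0)"
    unfolding eventually_at_right_field using bpos reg by (intro exI[of _ b]) auto
  show ?thesis unfolding D_def[symmetric]
    by (rule tendsto_sandwich[OF _ _ Llim Ulim]) (use ev in \<open>auto elim: eventually_mono\<close>)
qed



theorem theorem2p1:
  fixes lam :: real and F :: "(real \<times> real) set"
  assumes "1/2 < lam" and "lam < 1"
    and "garsia_number (1 / lam)"
    and "F \<noteq> {}" and "compact F" and "F \<subseteq> {0..1} \<times> {0..1}"
    and "F = (\<lambda>(x, y). (lam * x, lam * y)) ` F
            \<union> (\<lambda>(x, y). (lam * x + (1 - lam), lam * y)) ` F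
            \<union> ({0} \<times> {0..1})"
  shows "upper_box_dim F = ereal (ln (4 * lam) / ln 2)
    \<and> lower_box_dim F = ereal (ln (4 * lam) / ln 2)
    \<and> ln (4 * lam) / ln 2 > 1"
proof -
  have tl: "((\<lambda>\<delta>. ln (real (mesh_count \<delta> F)) / (- ln \<delta>)) \<longlongrightarrow> ln (4 * lam) / ln 2) (at_right 0)"
    by (rule main_tendsto[OF assms(1,2,6,7,3)])
  then have te: "((\<lambda>\<delta>. ereal (ln (real (mesh_count \<delta> F)) / (- ln \<delta>))) \<longlongrightarrow> ereal (ln (4 * lam) / ln 2)) (at_right 0)"
    by (rule tendsto_ereal)
  then have lims: "Liminf (at_right 0) (\<lambda>\<delta>. ereal (ln (real (mesh_count \<delta> F)) / (- ln \<delta>))) = ereal (ln (4 * lam) / ln 2)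
     \<and> Limsup (at_right 0) (\<lambda>\<delta>. ereal (ln (real (mesh_count \<delta> F)) / (- ln \<delta>))) = ereal (ln (4 * lam) / ln 2)"
    using tendsto_iff_Liminf_eq_Limsup[OF trivial_limit_at_right_real] by blast
  have "ln 2 < ln (4 * lam)" using assms(1) by simp
  moreover have "(0::real) < ln 2" by simp
  ultimately have gt: "ln (4 * lam) / ln 2 > 1" by (simp add: less_divide_eq_1_pos)
  show ?thesis unfolding upper_box_dim_def lower_box_dim_def using lims gt by simp
qed


end
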